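(* Let $q$ be a prime power, $m>3$, $n=q^m-1$, and define $Z_{des}=\{(x,y): 1\le x,y<n,\ xy<q^m-1-q^{\lfloor m/2\rfloor}\}$ and, for integers $0\le k\le (m-1)/2$, $Z_{des,k}=\{(x,y)\in Z_{des}: q^k-1<x\le q^{k+1}-1\}$. For $l\in\{0,1,\dots,m-1\}$ let $f(x,y,l)=(-xq^l\bmod n)\,(-yq^l\bmod n)$, where $a\bmod n\in\{0,\dots,n-1\}$. Then: (a) For every $0\le k\le (m-1)/2$, every $(x,y)\in Z_{des,k}$ and every $l\in\{0,\dots,m-1\}$ with $l\ne m-k-1$, one has $f(x,y,l)\ge q^m-1-q^{\lceil m/2\rceil-1}$, and this value is attained (for $k=0$, $x=1$, $y=q^m-1-q^{\lfloor m/2\rfloor+1}$, $l=\lceil m/2\rceil-1$). (b) For every $0\le k\le (m-1)/2$, every $(x,y)\in Z_{des,k}$ and $l=m-k-1$: if $m$ is odd then $f(x,y,l)\ge q^m-1$; if $m$ is even then $f(x,y,l)\ge (q^{m/2}-1)^2$, with equality attained at $k=m/2-1$, $l=m/2$, $x=y=q^{m/2}-1$.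
   Context: Here $a\bmod n$ denotes the least nonnegative residue of $a$ modulo $n$. *)

theory Defs
  imports "HOL-Computational_Algebra.Primes"
begin

definition prime_power :: "nat \<Rightarrow> bool" where
  "prime_power q \<longleftrightarrow> (\<exists>p e. prime p \<and> e \<ge> 1 \<and> q = p ^ e)"

definition Zdes :: "nat \<Rightarrow> nat \<Rightarrow> (int \<times> int) set" where
  "Zdes q m = {(x, y). 1 \<le> x \<and> x < int q ^ m - 1 \<and> 1 \<le> y \<and> y < int q ^ m - 1
                  \<and> x * y < int q ^ m - 1 - int q ^ (m div 2)}"

definition Zdes_k :: "nat \<Rightarrow> nat \<Rightarrow> nat \<Rightarrow> (int \<times> int) set" where
  "Zdes_k q m k = {(x, y) \<in> Zdes q m. int q ^ k - 1 < x \<and> x \<le> int q ^ (k + 1) - 1}"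

definition fval :: "nat \<Rightarrow> nat \<Rightarrow> int \<Rightarrow> int \<Rightarrow> nat \<Rightarrow> int" where
  "fval q m x y l = ((- x * int q ^ l) mod (int q ^ m - 1)) * ((- y * int q ^ l) mod (int q ^ m - 1))"

end

theory Submission
  imports Defs
begin

lemma modfacts:
  fixes s t u n :: int
  assumes s1: "s \<ge> 1" and t1: "t \<ge> 1" and nd: "n = s*t - 1" and u1: "1 \<le> u" and un: "u < n"
  shows "(-u*t) mod n \<ge> 1" and "((-u*t) mod n)*s + u \<ge> n"
    and "u < s \<Longrightarrow> (-u*t) mod n = n - u*t"
proof -
  define D where "D = (-u*t) div n"
  define U where "U = (-u*t) mod n"
  have npos: "n > 0" using u1 un by simp
  have U0: "U \<ge> 0" unfolding U_def using npos by simp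
  have UD: "U = -u*t - n*D" unfolding U_def D_def by (metis add_diff_cancel_left' div_mult_mod_eq mult.commute)
  have e0: "U*s = (-u*t - n*D)*s" using UD by simp
  have e1: "U*s = -u*(s*t) - n*D*s" unfolding e0 by (simp add: algebra_simps)
  have e2: "s*t = n+1" using nd by simp
  have key: "U*s + u = n*(-u - D*s)"
    using e1 unfolding e2 by (simp add: algebra_simps)
  have pos: "U*s + u > 0" proof -
    have "U*s \<ge> 0" using U0 s1 by simp
    thus ?thesis using u1 by linarith
  qed
  hence "-u - D*s > 0" using key npos by (simp add: zero_less_mult_iff)
  hence "-u - D*s \<ge> 1" by simp
  hence "n*(-u - D*s) \<ge> n*1" using npos by (intro mult_left_mono) auto
  thus "((-u*t) mod n)*s + u \<ge> n" using key U_def by simp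
  show "(-u*t) mod n \<ge> 1"
  proof (rule ccontr)
    assume "\<not> ?thesis"
    hence "U = 0" using U0 U_def by simp
    hence "u = n*(-u - D*s)" using key by simp
    moreover have "-u - D*s \<ge> 1" using \<open>-u - D*s \<ge> 1\<close> .
    ultimately have "u \<ge> n" using npos by (metis mult.right_neutral mult_left_mono less_le)
    thus False using un by simp
  qed
  assume "u < s"
  have a: "u*t \<le> n" proof -
    have "u*t \<le> (s-1)*t" using \<open>u < s\<close> t1 by (intro mult_right_mono) auto
    thus ?thesis using nd t1 by (simp add: algebra_simps)
  qed
  have b: "u*t > 0" using u1 t1 by simp
  have "(-u*t) mod n = ((n - u*t) + n*(-1)) mod n" by simp
  also have "\<dots> = (n - u*t) mod n" by (metis mod_mult_self2)
  also have "\<dots> = n - u*t" using a b by (intro mod_pos_pos_trivial) auto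
  finally show "(-u*t) mod n = n - u*t" .
qed

lemma sq_aux1: fixes s :: int assumes "s \<ge> 4" shows "2*(s-1)^2 \<ge> s^2"
proof -
  have "s*(s-4) \<ge> 0" using assms by simp
  thus ?thesis by (simp add: power2_eq_square algebra_simps)
qed

lemma sq_aux2: fixes s :: int assumes "s \<ge> 2" shows "4*(s-1)^2 \<ge> s^2"
proof -
  have "(s-2)*(3*s-2) \<ge> 0" using assms by simp
  thus ?thesis by (simp add: power2_eq_square algebra_simps)
qed

lemma tss: fixes s t :: int assumes "s \<ge> 2" "(s \<ge> 4 \<and> t \<ge> 2*s) \<or> t \<ge> 4*s"
  shows "t*(s-1)^2 \<ge> s^3"
proof (cases "s \<ge> 4 \<and> t \<ge> 2*s")
  case True
  have "t*(s-1)^2 \<ge> (2*s)*(s-1)^2" using True by (intro mult_right_mono) auto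
  moreover have "(2*s)*(s-1)^2 = s*(2*(s-1)^2)" by simp
  moreover have "s*(2*(s-1)^2) \<ge> s*s^2" using sq_aux1 True by (intro mult_left_mono) auto
  ultimately show ?thesis by (metis power3_eq_cube power2_eq_square mult.assoc order_trans)
next
  case False
  hence T: "t \<ge> 4*s" using assms by auto
  have "t*(s-1)^2 \<ge> (4*s)*(s-1)^2" using T by (intro mult_right_mono) auto
  moreover have "(4*s)*(s-1)^2 = s*(4*(s-1)^2)" by simp
  moreover have "s*(4*(s-1)^2) \<ge> s*s^2" using sq_aux2 assms by (intro mult_left_mono) auto
  ultimately show ?thesis by (metis power3_eq_cube power2_eq_square mult.assoc order_trans)
qed

lemma pow_lt_imp: fixes Q :: int assumes "Q \<ge> 2" "Q^a < Q^b" shows "a < b"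
  using power_strict_increasing_iff[of Q a b] assms by simp

lemma partA:
  fixes Q :: int and m k l :: nat and x y :: int
  assumes Q2: "Q \<ge> 2" and m3: "m > 3" and km: "2*k+1 \<le> m" and lm: "l < m" and lk: "l \<noteq> m - k - 1"
    and x1: "1 \<le> x" and xn: "x < Q^m - 1" and y1: "1 \<le> y" and yn: "y < Q^m - 1"
    and xy: "x*y < Q^m - 1 - Q^(m div 2)" and xlo: "Q^k - 1 < x" and xhi: "x \<le> Q^(k+1) - 1"
  shows "((-x*Q^l) mod (Q^m-1)) * ((-y*Q^l) mod (Q^m-1)) \<ge> Q^m - 1 - Q^((m+1) div 2 - 1)"
proof -
  define h where "h = m div 2"
  define H where "H = (m+1) div 2"
  define N where "N = Q^m"
  define n where "n = N - 1"
  define t where "t = Q^l"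
  define s where "s = Q^(m-l)"
  define A where "A = (-x*t) mod n"
  define B where "B = (-y*t) mod n"
  have hH: "h + H = m" "H \<le> h+1" "h \<ge> 2" "h \<le> H" "H \<ge> 2" unfolding h_def H_def using m3 by auto
  have st: "s*t = N" unfolding s_def t_def N_def using lm by (simp add: power_add[symmetric])
  have t1: "t \<ge> 1" unfolding t_def using Q2 by (intro one_le_power) auto
  have "Q^1 \<le> Q^(m-l)" using Q2 lm by (intro power_increasing) auto
  hence sQ: "s \<ge> Q" unfolding s_def by simp
  have s2: "s \<ge> 2" using sQ Q2 by simp
  have nd: "n = s*t - 1" using st n_def by simp
  have A1: "A \<ge> 1" and As: "A*s + x \<ge> n" and A3: "x < s \<Longrightarrow> A = n - x*t"
    using modfacts[OF _ t1 nd x1] s2 xn unfolding A_def n_def N_def by auto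
  have B1: "B \<ge> 1" and Bs: "B*s + y \<ge> n" and B3: "y < s \<Longrightarrow> B = n - y*t"
    using modfacts[OF _ t1 nd y1] s2 yn unfolding B_def n_def N_def by auto
  have xk: "Q^k \<le> x" "x < Q^(k+1)" using xlo xhi by auto
  have xH: "x < Q^H"
  proof -
    have "k+1 \<le> H" unfolding H_def using km by linarith
    hence "Q^(k+1) \<le> Q^H" using Q2 by (intro power_increasing) auto
    thus ?thesis using xk by simp
  qed
  have Hp: "Q^(H-1) \<ge> 0" "Q^h \<ge> 1" using Q2 by auto
  have xyh: "x*y < n - Q^h" using xy unfolding n_def N_def h_def by simp
  have "A*B \<ge> n - Q^(H-1)"
  proof (cases "x < s")
    case True
    have "Q^k < Q^(m-l)" using xk True unfolding s_def by simp
    hence "k < m - l" using Q2 by (simp add: power_strict_increasing_iff)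
    hence kl: "k + 1 < m - l" using lk lm by auto
    hence "Q^(k+1) \<le> Q^(m-l-1)" using Q2 by (intro power_increasing) auto
    moreover have "Q * Q^(m-l-1) = s"
    proof -
      have "m - l = Suc (m-l-1)" using kl by simp
      hence "s = Q^(Suc (m-l-1))" unfolding s_def by metis
      thus ?thesis by simp
    qed
    ultimately have "x < Q^(m-l-1)" using xk by simp
    hence "Q*x < Q*Q^(m-l-1)" using Q2 by simp
    hence "Q*x < s" using \<open>Q * Q^(m-l-1) = s\<close> by simp
    hence "Q*x \<le> s - 1" by simp
    hence "(Q*x)*t \<le> (s-1)*t" using t1 by (intro mult_right_mono) auto
    hence Qxt: "Q*x*t \<le> N - t" using st by (simp add: algebra_simps)
    have "2*x*t \<le> Q*x*t" using Q2 x1 t1 by (intro mult_right_mono) auto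
    hence xt2: "2*(x*t) \<le> N - t" using Qxt by simp
    have Aeq: "A = n - x*t" using A3 True by simp
    show ?thesis
    proof (cases "B \<ge> 2")
      case True
      have "A \<ge> 0" using A1 by simp
      hence "A*B \<ge> A*2" using True by (intro mult_left_mono) auto
      thus ?thesis using Aeq xt2 t1 Hp n_def by simp
    next
      case False
      hence Beq: "B = 1" using B1 by simp
      show ?thesis
      proof (cases "l = 0")
        case True
        hence "t = 1" "s = N" unfolding t_def s_def N_def by auto
        hence "y < s" using yn N_def by simp
        hence "y = n - 1" using B3 Beq \<open>t = 1\<close> by simp
        moreover have "x*y \<ge> 1*y" using x1 y1 by (intro mult_right_mono) auto
        ultimately show ?thesis using xyh Hp by simp
      next
        case False
        hence "Q^1 \<le> Q^l" using Q2 by (intro power_increasing) auto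
        hence "t \<ge> Q" unfolding t_def by simp
        hence "s*2 \<le> s*t" using Q2 s2 by (intro mult_left_mono) auto
        hence s2N: "2*s \<le> N" using st by simp
        have ys: "s + y \<ge> n" using Bs Beq by simp
        show ?thesis
        proof (cases "x \<ge> 2")
          case True
          have "x*y \<ge> 2*y" using True y1 by (intro mult_right_mono) auto
          thus ?thesis using ys s2N n_def xyh Hp by simp
        next
          case False
          hence "x = 1" using x1 by simp
          hence "s > Q^h" using xyh ys by simp
          hence "h < m - l" using Q2 unfolding s_def by (simp add: power_strict_increasing_iff)
          hence "l \<le> H - 1" using hH by simp
          hence "t \<le> Q^(H-1)" unfolding t_def using Q2 by (intro power_increasing) auto
          thus ?thesis using Aeq Beq \<open>x = 1\<close> by simp
        qed
      qed
    qed
  next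
    case False
    hence "Q^(m-l) < Q^H" using xH unfolding s_def by simp
    hence mlH: "m - l < H" using Q2 by (simp add: power_strict_increasing_iff)
    hence lh: "l \<ge> h+1" using hH by simp
    have "Q^H \<le> Q^(h+1)" using hH Q2 by (intro power_increasing) auto
    also have "\<dots> \<le> t" unfolding t_def using lh Q2 by (intro power_increasing) auto
    finally have xt: "x < t" using xH by simp
    have "s*y \<le> x*y" using False y1 by (intro mult_right_mono) auto
    hence "s*y < s*t" using xyh nd Hp by simp
    hence yt: "y < t" using s2 by simp
    have As2: "A*s \<ge> t*(s-1)" using As xt nd by (simp add: algebra_simps)
    have Bs2: "B*s \<ge> t*(s-1)" using Bs yt nd by (simp add: algebra_simps)
    have tsc: "(s \<ge> 4 \<and> t \<ge> 2*s) \<or> t \<ge> 4*s"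
    proof (cases "m - l = 1")
      case True
      hence "s = Q" unfolding s_def by simp
      have "l = (m-2) + 1" using True m3 by simp
      hence "t = Q^(m-2) * Q" unfolding t_def by simp
      moreover have "Q^(m-2) \<ge> Q^2" using m3 Q2 by (intro power_increasing) auto
      moreover have "Q^2 \<ge> 4" using Q2 unfolding power2_eq_square using mult_mono[of 2 Q 2 Q] by simp
      ultimately have "Q^(m-2) \<ge> 4" by simp
      hence "Q^(m-2)*Q \<ge> 4*Q" using Q2 by (intro mult_right_mono) auto
      hence "t \<ge> 4*Q" using \<open>t = Q^(m-2) * Q\<close> by simp
      thus ?thesis using \<open>s = Q\<close> by simp
    next
      case False
      hence "m - l \<ge> 2" using lm by simp
      hence "s \<ge> Q^2" unfolding s_def using Q2 by (intro power_increasing) auto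
      moreover have "Q^2 \<ge> 4" using Q2 unfolding power2_eq_square using mult_mono[of 2 Q 2 Q] by simp
      ultimately have s4: "s \<ge> 4" by simp
      have "l \<ge> (m-l) + 1" using lh mlH hH by simp
      hence "t \<ge> Q^((m-l)+1)" unfolding t_def using Q2 by (intro power_increasing) auto
      hence "t \<ge> Q*s" unfolding s_def by (simp add: mult.commute)
      moreover have "Q*s \<ge> 2*s" using Q2 s2 by (intro mult_right_mono) auto
      ultimately show ?thesis using s4 by linarith
    qed
    have T: "t*(s-1)^2 \<ge> s^3" using tss[OF s2 tsc] .
    have c1: "(A*s)*(B*s) \<ge> (t*(s-1))*(t*(s-1))"
    proof -
      have "0 \<le> t*(s-1)" using t1 s2 by simp
      moreover have "0 \<le> A*s" using A1 s2 by simp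
      ultimately show ?thesis using mult_mono[OF As2 Bs2] by blast
    qed
    have c2: "(t*(s-1))*(t*(s-1)) = t*(t*(s-1)^2)" by (simp add: power2_eq_square algebra_simps)
    have c3: "t*(t*(s-1)^2) \<ge> t*s^3" using T t1 by (intro mult_left_mono) auto
    have c4: "(A*s)*(B*s) = (A*B)*(s*s)" by (simp add: algebra_simps)
    have c5: "t*s^3 = (t*s)*(s*s)" by (simp add: power3_eq_cube algebra_simps)
    have "(A*B)*(s*s) \<ge> (t*s)*(s*s)" using c1 c2 c3 c4 c5 by linarith
    hence "A*B \<ge> t*s" using s2 by (simp add: mult_le_cancel_right)
    thus ?thesis using st nd Hp by (simp add: mult.commute)
  qed
  thus ?thesis unfolding A_def B_def t_def n_def N_def H_def by simp
qed

lemma partB: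
  fixes Q :: int and m k :: nat and x y :: int
  assumes Q2: "Q \<ge> 2" and m3: "m > 3" and km: "2*k+1 \<le> m"
    and x1: "1 \<le> x" and xn: "x < Q^m - 1" and y1: "1 \<le> y" and yn: "y < Q^m - 1"
    and xy: "x*y < Q^m - 1 - Q^(m div 2)" and xlo: "Q^k - 1 < x" and xhi: "x \<le> Q^(k+1) - 1"
  shows "(odd m \<longrightarrow> ((-x*Q^(m-k-1)) mod (Q^m-1)) * ((-y*Q^(m-k-1)) mod (Q^m-1)) \<ge> Q^m - 1)
       \<and> (even m \<longrightarrow> ((-x*Q^(m-k-1)) mod (Q^m-1)) * ((-y*Q^(m-k-1)) mod (Q^m-1)) \<ge> (Q^(m div 2) - 1)^2)"
proof -
  define h where "h = m div 2"
  define N where "N = Q^m"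
  define n where "n = N - 1"
  define t where "t = Q^(m-k-1)"
  define s where "s = Q^(k+1)"
  define A where "A = (-x*t) mod n"
  define B where "B = (-y*t) mod n"
  have h2: "h \<ge> 2" unfolding h_def using m3 by auto
  have e: "k+1 + (m-k-1) = m" using km by simp
  have st: "s*t = N" unfolding s_def t_def N_def by (metis e power_add)
  have t1: "t \<ge> 1" unfolding t_def using Q2 by (intro one_le_power) auto
  have "Q^1 \<le> Q^(k+1)" using Q2 by (intro power_increasing) auto
  hence sQ: "s \<ge> Q" unfolding s_def by simp
  have s2: "s \<ge> 2" using sQ Q2 by simp
  have nd: "n = s*t - 1" using st n_def by simp
  have A1: "A \<ge> 1" and As: "A*s + x \<ge> n" and A3: "x < s \<Longrightarrow> A = n - x*t"
    using modfacts[OF _ t1 nd x1] s2 xn unfolding A_def n_def N_def by auto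
  have B1: "B \<ge> 1" and Bs: "B*s + y \<ge> n" and B3: "y < s \<Longrightarrow> B = n - y*t"
    using modfacts[OF _ t1 nd y1] s2 yn unfolding B_def n_def N_def by auto
  have xk: "Q^k \<le> x" "x < s" using xlo xhi unfolding s_def by auto
  have Qx: "Q*x \<ge> s" using xk Q2 unfolding s_def by (simp add: mult_left_mono)
  have Aeq: "A = t*(s-x) - 1" using A3 xk nd by (simp add: algebra_simps)
  have Qh1: "Q^h \<ge> 1" using Q2 by (intro one_le_power) auto
  have xyh: "x*y < n - Q^h" using xy unfolding n_def N_def h_def by simp
  have hsq: "(Q^h - 1)^2 \<le> n"
  proof -
    have "Q^(h+h) \<le> Q^m" unfolding h_def using Q2 by (intro power_increasing) auto
    hence "Q^h*Q^h \<le> N" unfolding N_def by (simp add: power_add)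
    thus ?thesis unfolding n_def using Qh1 by (simp add: power2_eq_square algebra_simps)
  qed
  have main: "(A*B \<ge> n) \<or> (even m \<and> A*B \<ge> (Q^h - 1)^2)"
  proof (cases "y < s")
    case True
    have Beq: "B = t*(s-y) - 1" using B3 True nd by (simp add: algebra_simps)
    have tA: "A \<ge> t - 1"
    proof -
      have "t*(s-x) \<ge> t*1" using xk t1 by (intro mult_left_mono) auto
      thus ?thesis using Aeq by simp
    qed
    have tB: "B \<ge> t - 1"
    proof -
      have "t*(s-y) \<ge> t*1" using True t1 by (intro mult_left_mono) auto
      thus ?thesis using Beq by simp
    qed
    have AB0: "A*B \<ge> (t-1)*(t-1)" using tA tB t1 by (intro mult_mono) auto
    show ?thesis
    proof (cases "even m")
      case True
      hence "k + 1 \<le> h" using km unfolding h_def by auto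
      hence "h \<le> m - k - 1" unfolding h_def by auto
      hence "Q^h \<le> t" unfolding t_def using Q2 by (intro power_increasing) auto
      hence "(Q^h - 1)*(Q^h-1) \<le> (t-1)*(t-1)" using Qh1 by (intro mult_mono) auto
      thus ?thesis using AB0 True by (simp add: power2_eq_square)
    next
      case False
      show ?thesis
      proof (cases "k + 1 \<le> h")
        case True
        moreover have "m = 2*(m div 2) + 1" using False by presburger
        ultimately have "k + 2 \<le> m - k - 1" unfolding h_def by linarith
        hence "Q^(k+2) \<le> t" unfolding t_def using Q2 by (intro power_increasing) auto
        hence "Q*s \<le> t" unfolding s_def by simp
        moreover have "2*s \<le> Q*s" using Q2 s2 by (intro mult_right_mono) auto
        ultimately have "t - s - 2 \<ge> 0" using s2 by linarith
        hence "t*(t-s-2) \<ge> 0" using t1 by simp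
        hence "(t-1)*(t-1) \<ge> s*t + 1" by (simp add: algebra_simps)
        thus ?thesis using AB0 nd by simp
      next
        case kh: False
        hence keq: "k = h" using km False unfolding h_def by auto
        have "m = 2*(m div 2) + 1" using False by presburger
        hence "m - k - 1 = h" using keq unfolding h_def by linarith
        hence tq: "t = Q^h" unfolding t_def by simp
        hence sQt: "s = Q*t" unfolding s_def using keq by simp
        have tt: "t \<ge> Q + 2"
        proof -
          have "Q^2 \<le> Q^h" using h2 Q2 by (intro power_increasing) auto
          moreover have "(Q-2)*(Q+1) \<ge> 0" using Q2 by simp
          ultimately show ?thesis using tq by (simp add: power2_eq_square algebra_simps)
        qed
        define X where "X = s - x"
        define Y where "Y = s - y"
        have X1: "X \<ge> 1" "Y \<ge> 1" using xk True unfolding X_def Y_def by auto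
        have PS: "X*Y \<ge> X + Y - 1"
        proof -
          have "(X-1)*(Y-1) \<ge> 0" using X1 by simp
          thus ?thesis by (simp add: algebra_simps)
        qed
        have hyp: "(s - X)*(s - Y) \<le> s*t - 2 - t" using xyh nd tq unfolding X_def Y_def by simp
        hence "s*s - s*(X+Y) + X*Y \<le> s*t - 2 - t" by (simp add: algebra_simps)
        hence "s*(X+Y) > s*(s-t)" using PS X1 t1 by (simp add: algebra_simps)
        hence "X + Y > s - t" using s2 by (simp add: mult_less_cancel_left)
        moreover have "s - t \<ge> t"
        proof -
          have "2*t \<le> Q*t" using Q2 t1 by (intro mult_right_mono) auto
          thus ?thesis using sQt by simp
        qed
        ultimately have "X + Y \<ge> t + 1" by simp
        hence P: "X*Y \<ge> t" using PS by simp
        have AX: "A = t*X - 1" using Aeq unfolding X_def by simp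
        have BY: "B = t*Y - 1" using Beq unfolding Y_def by simp
        have "A*B = (t*X - 1)*(t*Y - 1)" unfolding AX BY ..
        also have "\<dots> = t*t*(X*Y) - t*(X+Y) + 1" by (simp add: algebra_simps)
        finally have ABe: "A*B = t*t*(X*Y) - t*(X+Y) + 1" .
        have "t*(X+Y) \<le> t*(X*Y + 1)" using PS t1 by (intro mult_left_mono) auto
        hence "A*B \<ge> (X*Y)*(t*t - t) - t + 1" using ABe by (simp add: algebra_simps)
        moreover have "(X*Y)*(t*t - t) \<ge> t*(t*t - t)"
          using P t1 by (intro mult_right_mono) (auto simp: algebra_simps)
        moreover have "t*(t*t-t) \<ge> Q*t*t + t"
        proof -
          have "t*t*(t-1) \<ge> t*t*(Q+1)" using tt t1 by (intro mult_left_mono) auto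
          moreover have "t*t \<ge> t*1" using t1 by (intro mult_left_mono) auto
          ultimately show ?thesis by (simp add: algebra_simps)
        qed
        ultimately have "A*B \<ge> Q*t*t" by simp
        thus ?thesis using nd sQt by simp
      qed
    qed
  next
    case False
    hence ys: "y \<ge> s" by simp
    have "s*s \<le> (Q*x)*y" using Qx ys s2 by (intro mult_mono) auto
    also have "\<dots> < Q*N"
    proof -
      have "x*y < N" using xyh n_def Qh1 by simp
      hence "Q*(x*y) < Q*N" using Q2 by simp
      thus ?thesis by (simp add: mult.assoc)
    qed
    finally have "s*s < s*(Q*t)" using st by (simp add: algebra_simps)
    hence "s < Q*t" using s2 by (simp add: mult_less_cancel_left)
    hence "Q^(k+1) < Q^(Suc (m-k-1))" unfolding s_def t_def by simp
    hence kk: "k + 1 \<le> m - k - 1" using Q2 by (simp add: power_strict_increasing_iff)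
    hence ts: "s \<le> t" unfolding s_def t_def using Q2 by (intro power_increasing) auto
    have "k + 1 \<le> h" using kk unfolding h_def by auto
    hence sh: "s \<le> Q^h" unfolding s_def using Q2 by (intro power_increasing) auto
    have "A*B \<ge> N"
    proof (cases "x = 1")
      case True
      hence "s \<le> Q" using Qx by simp
      hence sq: "s = Q" using sQ by simp
      moreover have "m = Suc (m-1)" using m3 by simp
      hence "Q^m = Q*Q^(m-1)" by (metis power_Suc)
      ultimately have "Q*t = Q*Q^(m-1)" using st unfolding N_def by simp
      hence tq: "t = Q^(m-1)" using Q2 by simp
      have "Q^2 \<le> Q^(m-1)" using m3 Q2 by (intro power_increasing) auto
      moreover have "(Q-2)*(Q+1) \<ge> 0" using Q2 by simp
      ultimately have tQ: "t \<ge> Q + 2" using tq by (simp add: power2_eq_square algebra_simps)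
      have "B*Q > Q^h" using Bs xyh True sq by simp
      moreover have "Q^h = Q*Q^(h-1)"
      proof -
        have "h = Suc (h-1)" using h2 by simp
        thus ?thesis by (metis power_Suc)
      qed
      ultimately have "Q*B > Q*Q^(h-1)" by (simp add: mult.commute)
      hence "B > Q^(h-1)" using Q2 by (simp add: mult_less_cancel_left)
      moreover have "Q^1 \<le> Q^(h-1)" using h2 Q2 by (intro power_increasing) auto
      ultimately have BQ: "B \<ge> Q + 1" by simp
      have "A \<ge> t - 1"
      proof -
        have "t*(s-x) \<ge> t*1" using xk t1 by (intro mult_left_mono) auto
        thus ?thesis using Aeq by simp
      qed
      hence "A*B \<ge> (t-1)*(Q+1)" using BQ t1 Q2 by (intro mult_mono) auto
      thus ?thesis using st sq tQ by (simp add: algebra_simps)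
    next
      case False
      hence x2: "x \<ge> 2" using x1 by simp
      have "2*y \<le> x*y" using x2 y1 by (intro mult_right_mono) auto
      hence "2*(B*s) \<ge> N + Q^h" using Bs xyh n_def by simp
      show ?thesis
      proof (cases "s - x \<ge> 2")
        case True
        have "t*(s-x) \<ge> t*2" using True t1 by (intro mult_left_mono) auto
        hence A2: "A \<ge> 2*t - 1" using Aeq by simp
        have H1: "2*(B*s)*A \<ge> (N + Q^h)*(2*t - 1)"
          using \<open>2*(B*s) \<ge> N + Q^h\<close> A2 t1 Qh1 B1 s2 by (intro mult_mono) auto
        have H1e: "(N + Q^h)*(2*t - 1) = 2*(t*N) - N + 2*(t*Q^h) - Q^h" by (simp add: algebra_simps)
        have H1f: "2*(B*s)*A = 2*((A*B)*s)" by (simp add: algebra_simps)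
        have H2: "(2*t-1)*Q^h \<ge> (2*t-1)*s" using sh t1 by (intro mult_left_mono) auto
        have H2e: "(2*t-1)*Q^h = 2*(t*Q^h) - Q^h" by (simp add: algebra_simps)
        have H2f: "(2*t-1)*s = 2*(s*t) - s" by (simp add: algebra_simps)
        have H3: "t*N \<ge> s*N" using ts st s2 t1 by (intro mult_right_mono) auto
        have H4: "s*1 \<le> s*t" using s2 t1 by (intro mult_left_mono) auto
        have "2*((A*B)*s) \<ge> 2*(s*N)" 
        proof -
          have L1: "2*((A*B)*s) \<ge> 2*(t*N) - N + 2*(t*Q^h) - Q^h" using H1 H1e H1f by linarith
          have L2: "2*(t*Q^h) - Q^h \<ge> 2*N - s" using H2 H2e H2f st by simp
          have L4: "s \<le> N" using H4 st by simp
          have L3: "t*N \<ge> s*N" using H3 .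
          show ?thesis using L1 L2 L3 L4 by linarith
        qed
        hence "(A*B)*(2*s) \<ge> N*(2*s)" by (simp add: algebra_simps)
        thus ?thesis using s2 by (simp add: mult_le_cancel_right)
      next
        case False
        hence xs: "x = s - 1" using xk by simp
        hence s3: "s \<ge> 3" using x2 by simp
        have A0: "A = t - 1" using Aeq xs by simp
        have "(s-1)*s \<le> (s-1)*y" using ys s3 by (intro mult_left_mono) auto
        hence "s*s < s*t" using xyh xs nd sh by (simp add: algebra_simps)
        hence "s < t" using s2 by (simp add: mult_less_cancel_left)
        hence "Q^(k+1) < Q^(m-k-1)" unfolding s_def t_def by simp
        hence "k + 1 < m - k - 1" using pow_lt_imp[OF Q2] by blast
        hence "k + 2 \<le> m - k - 1" by simp
        hence "Q^(k+2) \<le> t" unfolding t_def using Q2 by (intro power_increasing) auto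
        hence tQs: "Q*s \<le> t" unfolding s_def by simp
        have key: "(t-1)*(s-2) \<ge> s*(s-1)"
        proof (cases "s = 3")
          case True
          have "Q \<noteq> 2"
          proof
            assume "Q = 2"
            hence "even s" unfolding s_def by simp
            thus False using True by simp
          qed
          hence "Q \<ge> 3" using Q2 by simp
          hence "Q*s \<ge> 3*3" using True by (intro mult_mono) auto
          hence "t \<ge> 9" using tQs by simp
          thus ?thesis using True by simp
        next
          case False
          hence s4: "s \<ge> 4" using s3 by simp
          have "2*s \<le> Q*s" using Q2 s2 by (intro mult_right_mono) auto
          hence "(t-1)*(s-2) \<ge> (2*s-1)*(s-2)" using tQs s4 by (intro mult_right_mono) linarith+
          moreover have "s*(s-4) \<ge> 0" using s4 by simp
          ultimately show ?thesis by (simp add: algebra_simps)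
        qed
        have "(s-1)*(B*s) \<ge> (s-1)*(n-y)" using Bs s3 by (intro mult_left_mono) auto
        moreover have "(s-1)*y \<le> N - 2 - Q^h" using xyh xs n_def by (simp add: mult.commute)
        ultimately have "(s-1)*(B*s) \<ge> (s-2)*N" using sh n_def by (simp add: algebra_simps)
        hence "(t-1)*((s-1)*(B*s)) \<ge> (t-1)*((s-2)*N)" using t1 by (intro mult_left_mono) auto
        hence "A*((s-1)*(B*s)) \<ge> (t-1)*((s-2)*N)" using A0 by simp
        moreover have "(t-1)*((s-2)*N) \<ge> (s*(s-1))*N"
        proof -
          have "N \<ge> 0" using st s2 t1 by (metis mult_nonneg_nonneg order_trans zero_le_one less_imp_le one_le_numeral order.trans)
          hence "((t-1)*(s-2))*N \<ge> (s*(s-1))*N" using key by (intro mult_right_mono) auto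
          thus ?thesis by (simp add: mult.assoc)
        qed
        ultimately have "(A*B)*(s*(s-1)) \<ge> N*(s*(s-1))" by (simp add: algebra_simps)
        thus ?thesis using s3 by (simp add: mult_le_cancel_right)
      qed
    qed
    thus ?thesis using n_def by simp
  qed
  show ?thesis using main hsq unfolding A_def B_def t_def n_def N_def h_def by auto
qed

theorem lemma4:
  fixes q m :: nat
  assumes "prime_power q" and "m > 3"
  shows
    "(\<forall>k l x y. 2 * k + 1 \<le> m \<longrightarrow> (x, y) \<in> Zdes_k q m k \<longrightarrow> l < m \<longrightarrow> l \<noteq> m - k - 1 \<longrightarrow>
        fval q m x y l \<ge> int q ^ m - 1 - int q ^ ((m + 1) div 2 - 1))
   \<and> ((1, int q ^ m - 1 - int q ^ (m div 2 + 1)) \<in> Zdes_k q m 0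
      \<and> (m + 1) div 2 - 1 < m \<and> (m + 1) div 2 - 1 \<noteq> m - 0 - 1
      \<and> fval q m 1 (int q ^ m - 1 - int q ^ (m div 2 + 1)) ((m + 1) div 2 - 1)
          = int q ^ m - 1 - int q ^ ((m + 1) div 2 - 1))
   \<and> (\<forall>k x y. 2 * k + 1 \<le> m \<longrightarrow> (x, y) \<in> Zdes_k q m k \<longrightarrow>
        (odd m \<longrightarrow> fval q m x y (m - k - 1) \<ge> int q ^ m - 1)
      \<and> (even m \<longrightarrow> fval q m x y (m - k - 1) \<ge> (int q ^ (m div 2) - 1)\<^sup>2))
   \<and> (even m \<longrightarrow>
        2 * (m div 2 - 1) + 1 \<le> m
      \<and> (int q ^ (m div 2) - 1, int q ^ (m div 2) - 1) \<in> Zdes_k q m (m div 2 - 1)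
      \<and> m div 2 = m - (m div 2 - 1) - 1
      \<and> fval q m (int q ^ (m div 2) - 1) (int q ^ (m div 2) - 1) (m div 2)
          = (int q ^ (m div 2) - 1)\<^sup>2)"
proof -
  obtain p e where pe: "prime p" "e \<ge> 1" "q = p^e" using assms(1) unfolding prime_power_def by blast
  have "p \<ge> 2" using pe prime_ge_2_nat by blast
  moreover have "p^1 \<le> p^e" using pe \<open>p \<ge> 2\<close> by (intro power_increasing) auto
  ultimately have q2: "q \<ge> 2" using pe by simp
  define Q where "Q = int q"
  have Q2: "Q \<ge> 2" using q2 unfolding Q_def by simp
  have m3: "m > 3" using assms(2) .
  define h where "h = m div 2"
  define H where "H = (m+1) div 2"
  define n where "n = Q^m - 1"
  have hH: "h + H = m" "H \<le> h+1" "h \<ge> 2" "h \<le> H" "H \<ge> 2" unfolding h_def H_def using m3 by auto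
  have P1: "\<forall>k l x y. 2 * k + 1 \<le> m \<longrightarrow> (x, y) \<in> Zdes_k q m k \<longrightarrow> l < m \<longrightarrow> l \<noteq> m - k - 1 \<longrightarrow>
        fval q m x y l \<ge> int q ^ m - 1 - int q ^ ((m + 1) div 2 - 1)"
    using partA[OF Q2 m3] unfolding Zdes_k_def Zdes_def fval_def Q_def by auto
  have P3: "\<forall>k x y. 2 * k + 1 \<le> m \<longrightarrow> (x, y) \<in> Zdes_k q m k \<longrightarrow>
        (odd m \<longrightarrow> fval q m x y (m - k - 1) \<ge> int q ^ m - 1)
      \<and> (even m \<longrightarrow> fval q m x y (m - k - 1) \<ge> (int q ^ (m div 2) - 1)\<^sup>2)"
    using partB[OF Q2 m3] unfolding Zdes_k_def Zdes_def fval_def Q_def by auto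
  have P2: "(1, int q ^ m - 1 - int q ^ (m div 2 + 1)) \<in> Zdes_k q m 0
      \<and> (m + 1) div 2 - 1 < m \<and> (m + 1) div 2 - 1 \<noteq> m - 0 - 1
      \<and> fval q m 1 (int q ^ m - 1 - int q ^ (m div 2 + 1)) ((m + 1) div 2 - 1)
          = int q ^ m - 1 - int q ^ ((m + 1) div 2 - 1)"
  proof -
    define y where "y = Q^m - 1 - Q^(h+1)"
    define t where "t = Q^(H-1)"
    define s where "s = Q^(m-(H-1))"
    have e0: "m - (H-1) + (H-1) = m" using hH by simp
    have st: "s*t = Q^m" unfolding s_def t_def by (metis e0 power_add)
    have "Q^(h+1)*Q \<le> Q^m"
    proof -
      have "Q^(h+2) \<le> Q^m" using hH m3 Q2 by (intro power_increasing) auto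
      thus ?thesis by (simp add: algebra_simps)
    qed
    moreover have Qh1: "Q^(h+1) \<ge> 1" using Q2 by (intro one_le_power) auto
    moreover have "Q^(h+1)*2 \<le> Q^(h+1)*Q" using Q2 Qh1 by (intro mult_left_mono) auto
    ultimately have "Q^(h+1)*2 \<le> Q^m" by simp
    moreover have "Q^1 \<le> Q^(h+1)" using Q2 by (intro power_increasing) auto
    hence "Q^(h+1) \<ge> 2" using Q2 unfolding power_one_right by linarith
    ultimately have y1: "y \<ge> 1" unfolding y_def by linarith
    have hh: "Q^h < Q^(h+1)" using Q2 by (intro power_strict_increasing) auto
    have Qh0: "Q^h \<ge> 1" using Q2 by (intro one_le_power) auto
    have mem: "(1, y) \<in> Zdes_k q m 0"
      unfolding Zdes_k_def Zdes_def y_def using y1 Qh1 hh Qh0 \<open>Q^(h+1)*2 \<le> Q^m\<close> Q2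
      by (auto simp: Q_def[symmetric] h_def y_def)
    have t1: "t \<ge> 1" unfolding t_def using Q2 by (intro one_le_power) auto
    have s2: "s \<ge> 2"
    proof -
      have "Q^1 \<le> s" unfolding s_def using hH Q2 by (intro power_increasing) auto
      thus ?thesis using Q2 by simp
    qed
    have nd: "n = s*t - 1" using st n_def by simp
    have "Q^1 \<le> t" unfolding t_def using hH Q2 by (intro power_increasing) auto
    hence "t \<ge> 2" using Q2 by simp
    hence "s*t \<ge> 2*2" using s2 by (intro mult_mono) auto
    hence n2: "n \<ge> 2" using nd by simp
    have f1: "(-1*t) mod n = n - 1*t" using modfacts(3)[OF _ t1 nd, of 1] s2 n2 by simp
    have e1: "h + 1 + (H - 1) = m" using hH by simp
    have "Q^(h+1)*t = Q^m" unfolding t_def by (metis e1 power_add)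
    hence "-y*t = 1 + n*(1 - t)" unfolding y_def n_def by (simp add: algebra_simps)
    hence "(-y*t) mod n = (1 + n*(1-t)) mod n" by simp
    also have "\<dots> = 1 mod n" by (metis mod_mult_self2)
    also have "\<dots> = 1" using n2 by simp
    finally have f2: "(-y*t) mod n = 1" .
    have "fval q m 1 y (H-1) = n - t"
      unfolding fval_def using f1 f2 by (simp add: Q_def[symmetric] t_def n_def)
    moreover have "H - 1 < m" "H - 1 \<noteq> m - 0 - 1" using hH by auto
    ultimately show ?thesis using mem unfolding y_def h_def H_def t_def n_def Q_def by simp
  qed
  have P4: "even m \<longrightarrow>
        2 * (m div 2 - 1) + 1 \<le> m
      \<and> (int q ^ (m div 2) - 1, int q ^ (m div 2) - 1) \<in> Zdes_k q m (m div 2 - 1)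
      \<and> m div 2 = m - (m div 2 - 1) - 1
      \<and> fval q m (int q ^ (m div 2) - 1) (int q ^ (m div 2) - 1) (m div 2)
          = (int q ^ (m div 2) - 1)\<^sup>2"
  proof
    assume ev: "even m"
    hence m2h: "m = h + h" unfolding h_def by auto
    define z where "z = Q^h - 1"
    have QQ: "Q^m = Q^h*Q^h" using m2h by (simp add: power_add)
    have "Q^2 \<le> Q^h" using hH Q2 by (intro power_increasing) auto
    moreover have "Q^2 \<ge> 4" using Q2 unfolding power2_eq_square using mult_mono[of 2 Q 2 Q] by simp
    ultimately have Qh4: "Q^h \<ge> 4" by simp
    have big: "Q^h*Q^h \<ge> 4*Q^h" using Qh4 by (intro mult_right_mono) auto
    have zz: "z*z = Q^h*Q^h - 2*Q^h + 1" unfolding z_def by (simp add: algebra_simps)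
    have e1: "h - 1 + 1 = h" using hH by simp
    have "Q^(h-1) < Q^h" using Q2 hH by (intro power_strict_increasing) auto
    hence mem: "(z, z) \<in> Zdes_k q m (h-1)"
      unfolding Zdes_k_def Zdes_def using Qh4 big zz QQ e1
      by (auto simp: Q_def[symmetric] h_def[symmetric] z_def power2_eq_square)
    have "-z*Q^h = (z) + n*(-1)" unfolding z_def n_def QQ by (simp add: algebra_simps)
    hence "(-z*Q^h) mod n = (z + n*(-1)) mod n" by simp
    also have "\<dots> = z mod n" by (metis mod_mult_self2)
    also have "\<dots> = z" unfolding z_def n_def QQ using Qh4 big by (intro mod_pos_pos_trivial) auto
    finally have "(-z*Q^h) mod n = z" .
    hence "fval q m z z h = z^2" unfolding fval_def by (simp add: Q_def[symmetric] n_def power2_eq_square)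
    moreover have "2 * (h - 1) + 1 \<le> m" "h = m - (h - 1) - 1" using m2h hH by auto
    ultimately show "2 * (m div 2 - 1) + 1 \<le> m
      \<and> (int q ^ (m div 2) - 1, int q ^ (m div 2) - 1) \<in> Zdes_k q m (m div 2 - 1)
      \<and> m div 2 = m - (m div 2 - 1) - 1
      \<and> fval q m (int q ^ (m div 2) - 1) (int q ^ (m div 2) - 1) (m div 2)
          = (int q ^ (m div 2) - 1)\<^sup>2" using mem unfolding z_def h_def Q_def by simp
  qed
  show ?thesis using P1 P2 P3 P4 by blast
qed

end
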